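(* For every finite multiset $\Delta$ and formulas $\varphi,\psi,\chi$: if $\Delta,\Box\varphi\to\psi\Rightarrow\chi$ has a proof of height $h$ in $\mathsf{G4iSLt}$, then $\Delta,\psi\Rightarrow\chi$ has a proof in $\mathsf{G4iSLt}$ of height at most $h$.
   Context: Formulas are built by the grammar $\varphi ::= p \mid \bot \mid \varphi\land\varphi \mid \varphi\lor\varphi \mid \varphi\to\varphi \mid \Box\varphi$, with $p$ ranging over a countably infinite set of propositional variables. For a multiset $\Gamma$, $\Box\Gamma=\{\Box\psi:\psi\in\Gamma\}$; a boxed formula is one of the form $\Box\psi$. A sequent is $\Gamma\Rightarrow\chi$ with $\Gamma$ a finite multiset of formulas and $\chi$ a formula. The sequent calculus $\mathsf{G4iSLt}$ has the following rules, where $p$ is a propositional variable and $\Phi$ always denotes a multiset containing no boxed formula: (⊥L) $\bot,\Gamma\Rightarrow\chi$ (no premise); (IdP) $\Gamma,p\Rightarrow p$ (no premise); (∧L) from $\Gamma,\varphi,\psi\Rightarrow\chi$ infer $\Gamma,\varphi\land\psi\Rightarrow\chi$; (∧R) from $\Gamma\Rightarrow\varphi$ and $\Gamma\Rightarrow\psi$ infer $\Gamma\Rightarrow\varphi\land\psi$; (∨L) from $\Gamma,\varphi\Rightarrow\chi$ and $\Gamma,\psi\Rightarrow\chi$ infer $\Gamma,\varphi\lor\psi\Rightarrow\chi$; (∨R$_i$), $i\in\{1,2\}$: from $\Gamma\Rightarrow\varphi_i$ infer $\Gamma\Rightarrow\varphi_1\lor\varphi_2$; (p→L) from $\Gamma,p,\varphi\Rightarrow\chi$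 infer $\Gamma,p,p\to\varphi\Rightarrow\chi$; (→R) from $\Gamma,\varphi\Rightarrow\psi$ infer $\Gamma\Rightarrow\varphi\to\psi$; (□→L) from $\Phi,\Gamma,\psi,\Box\varphi\Rightarrow\varphi$ and $\Phi,\Box\Gamma,\psi\Rightarrow\chi$ infer $\Phi,\Box\Gamma,\Box\varphi\to\psi\Rightarrow\chi$; (SLtR) from $\Phi,\Gamma,\Box\varphi\Rightarrow\varphi$ infer $\Phi,\Box\Gamma\Rightarrow\Box\varphi$; (∧→L) from $\Gamma,\varphi\to(\psi\to\chi)\Rightarrow\delta$ infer $\Gamma,(\varphi\land\psi)\to\chi\Rightarrow\delta$; (∨→L) from $\Gamma,\varphi\to\chi,\psi\to\chi\Rightarrow\delta$ infer $\Gamma,(\varphi\lor\psi)\to\chi\Rightarrow\delta$; (→→L) from $\Gamma,\psi\to\chi\Rightarrow\varphi\to\psi$ and $\Gamma,\chi\Rightarrow\delta$ infer $\Gamma,(\varphi\to\psi)\to\chi\Rightarrow\delta$. A proof of a sequent $S$ is a finite tree of sequents with root $S$ in which each interior node together with its children forms an instance of a rule (conclusion, premises) and each leaf is the conclusion of a premise-free rule; $S$ is provable if it has a proof. The height of a proof is the maximum number of nodes on a path from the root to a leaf. *)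

theory Defs
  imports Main "HOL-Library.Multiset"
begin

datatype form =
    Var nat
  | Bot
  | And form form
  | Or form form
  | Imp form form
  | Box form

definition boxed :: "form \<Rightarrow> bool" where
  "boxed A \<longleftrightarrow> (\<exists>B. A = Box B)"

definition boxfree :: "form multiset \<Rightarrow> bool" where
  "boxfree \<Phi> \<longleftrightarrow> (\<forall>A \<in># \<Phi>. \<not> boxed A)"

inductive g4proof :: "nat \<Rightarrow> form multiset \<Rightarrow> form \<Rightarrow> bool" where
  BotL: "g4proof 1 (add_mset Bot G) C"
| IdP: "g4proof 1 (add_mset (Var p) G) (Var p)"
| AndL: "g4proof n (add_mset A (add_mset B G)) C \<Longrightarrow> g4proof (Suc n) (add_mset (And A B) G) C"
| AndR: "g4proof n G A \<Longrightarrow> g4proof m G B \<Longrightarrow> g4proof (Suc (max n m)) G (And A B)"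
| OrL: "g4proof n (add_mset A G) C \<Longrightarrow> g4proof m (add_mset B G) C \<Longrightarrow>
          g4proof (Suc (max n m)) (add_mset (Or A B) G) C"
| OrR1: "g4proof n G A \<Longrightarrow> g4proof (Suc n) G (Or A B)"
| OrR2: "g4proof n G B \<Longrightarrow> g4proof (Suc n) G (Or A B)"
| VarImpL: "g4proof n (add_mset (Var p) (add_mset A G)) C \<Longrightarrow>
          g4proof (Suc n) (add_mset (Var p) (add_mset (Imp (Var p) A) G)) C"
| ImpR: "g4proof n (add_mset A G) B \<Longrightarrow> g4proof (Suc n) G (Imp A B)"
| BoxImpL: "boxfree \<Phi> \<Longrightarrow>
          g4proof n (\<Phi> + \<Gamma> + {#B, Box A#}) A \<Longrightarrow>
          g4proof m (\<Phi> + image_mset Box \<Gamma> + {#B#}) C \<Longrightarrow>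
          g4proof (Suc (max n m)) (\<Phi> + image_mset Box \<Gamma> + {#Imp (Box A) B#}) C"
| SLtR: "boxfree \<Phi> \<Longrightarrow>
          g4proof n (\<Phi> + \<Gamma> + {#Box A#}) A \<Longrightarrow>
          g4proof (Suc n) (\<Phi> + image_mset Box \<Gamma>) (Box A)"
| AndImpL: "g4proof n (add_mset (Imp A (Imp B C)) G) D \<Longrightarrow>
          g4proof (Suc n) (add_mset (Imp (And A B) C) G) D"
| OrImpL: "g4proof n (add_mset (Imp A C) (add_mset (Imp B C) G)) D \<Longrightarrow>
          g4proof (Suc n) (add_mset (Imp (Or A B) C) G) D"
| ImpImpL: "g4proof n (add_mset (Imp B C) G) (Imp A B) \<Longrightarrow>
          g4proof m (add_mset C G) D \<Longrightarrow>
          g4proof (Suc (max n m)) (add_mset (Imp (Imp A B) C) G) D"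

end

theory Submission
  imports Defs
begin

lemma g4_cong: "g4proof n G C \<Longrightarrow> G = G' \<Longrightarrow> g4proof n G' C" by simp

lemma boxed_simps[simp]: "boxed (Box A)" "\<not> boxed (Var p)" "\<not> boxed Bot"
  "\<not> boxed (And A B)" "\<not> boxed (Or A B)" "\<not> boxed (Imp A B)"
  by (auto simp: boxed_def)

lemma boxfree_add[simp]: "boxfree (add_mset A \<Phi>) \<longleftrightarrow> \<not> boxed A \<and> boxfree \<Phi>"
  by (auto simp: boxfree_def)

lemma boxfree_mem: "boxfree \<Phi> \<Longrightarrow> Box A \<in># \<Phi> \<Longrightarrow> False"
  by (auto simp: boxfree_def)

lemma split1: "add_mset a G = add_mset x D \<Longrightarrow> a \<noteq> x \<Longrightarrow> \<exists>G0. G = add_mset x G0 \<and> D = add_mset a G0"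
  by (metis add_eq_conv_ex)

lemma not_boxed_ex: "\<not> boxed A \<or> (\<exists>B. A = Box B)"
  by (auto simp: boxed_def)

lemma box_split:
  assumes "\<Phi> + image_mset Box \<Gamma> = add_mset (Box A0) G0" "boxfree \<Phi>"
  shows "\<exists>\<Gamma>0. \<Gamma> = add_mset A0 \<Gamma>0 \<and> G0 = \<Phi> + image_mset Box \<Gamma>0"
proof -
  have "Box A0 \<in># \<Phi> + image_mset Box \<Gamma>" using assms(1) by simp
  hence "Box A0 \<in># image_mset Box \<Gamma>" using assms(2) boxfree_mem by auto
  hence "A0 \<in># \<Gamma>" by auto
  then obtain \<Gamma>0 where g: "\<Gamma> = add_mset A0 \<Gamma>0" by (metis multi_member_split)
  have "G0 = \<Phi> + image_mset Box \<Gamma>0" using assms(1) g by simp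
  thus ?thesis using g by blast
qed

lemma nbox_split:
  assumes "\<Phi> + image_mset Box \<Gamma> = add_mset X G0" "\<not> boxed X"
  shows "\<exists>\<Phi>0. \<Phi> = add_mset X \<Phi>0 \<and> G0 = \<Phi>0 + image_mset Box \<Gamma>"
proof -
  have "X \<in># \<Phi> + image_mset Box \<Gamma>" using assms(1) by simp
  hence "X \<in># \<Phi>" using assms(2) by auto
  then obtain \<Phi>0 where g: "\<Phi> = add_mset X \<Phi>0" by (metis multi_member_split)
  have "G0 = \<Phi>0 + image_mset Box \<Gamma>" using assms(1) g by simp
  thus ?thesis using g by blast
qed

lemma unbox:
  "g4proof h G C \<Longrightarrow> G = add_mset (Box A0) D \<Longrightarrow> \<exists>k\<le>h. g4proof k (add_mset A0 D) C"
proof (induction arbitrary: A0 D rule: g4proof.induct)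
  case (BotL G C)
  obtain G0 where "G = add_mset (Box A0) G0" "D = add_mset Bot G0" using split1[OF BotL.prems] by auto
  then show ?case using g4proof.BotL[of "add_mset A0 G0" C]
    by (auto intro!: exI[of _ 1] simp: add_mset_commute)
next
  case (IdP p G)
  obtain G0 where "G = add_mset (Box A0) G0" "D = add_mset (Var p) G0" using split1[OF IdP.prems] by auto
  then show ?case using g4proof.IdP[of p "add_mset A0 G0"]
    by (auto intro!: exI[of _ 1] simp: add_mset_commute)
next
  case (AndL n A B G C)
  obtain G0 where G: "G = add_mset (Box A0) G0" "D = add_mset (And A B) G0" using split1[OF AndL.prems] by auto
  have "add_mset A (add_mset B G) = add_mset (Box A0) (add_mset A (add_mset B G0))"
    using G by (simp add: add_mset_commute)
  from AndL.IH[OF this] obtain k where k: "k \<le> n" "g4proof k (add_mset A0 (add_mset A (add_mset B G0))) C" by blast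
  have "g4proof (Suc k) (add_mset (And A B) (add_mset A0 G0)) C"
    by (rule g4proof.AndL, rule g4_cong[OF k(2)], simp add: add_mset_commute)
  then show ?case using k G by (auto intro!: exI[of _ "Suc k"] simp: add_mset_commute)
next
  case (AndR n G A m B)
  from AndR.IH(1)[OF AndR.prems] obtain k where k: "k \<le> n" "g4proof k (add_mset A0 D) A" by blast
  from AndR.IH(2)[OF AndR.prems] obtain k' where k': "k' \<le> m" "g4proof k' (add_mset A0 D) B" by blast
  show ?case using g4proof.AndR[OF k(2) k'(2)] k k' by (auto intro!: exI[of _ "Suc (max k k')"])
next
  case (OrL n A G C m B)
  obtain G0 where G: "G = add_mset (Box A0) G0" "D = add_mset (Or A B) G0" using split1[OF OrL.prems] by auto
  have e1: "add_mset A G = add_mset (Box A0) (add_mset A G0)" using G by (simp add: add_mset_commute)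
  have e2: "add_mset B G = add_mset (Box A0) (add_mset B G0)" using G by (simp add: add_mset_commute)
  from OrL.IH(1)[OF e1] obtain k where k: "k \<le> n" "g4proof k (add_mset A0 (add_mset A G0)) C" by blast
  from OrL.IH(2)[OF e2] obtain k' where k': "k' \<le> m" "g4proof k' (add_mset A0 (add_mset B G0)) C" by blast
  have "g4proof (Suc (max k k')) (add_mset (Or A B) (add_mset A0 G0)) C"
    by (rule g4proof.OrL; rule g4_cong[OF k(2)] g4_cong[OF k'(2)]; simp add: add_mset_commute)
  then show ?case using k k' G by (auto intro!: exI[of _ "Suc (max k k')"] simp: add_mset_commute)
next
  case (OrR1 n G A B)
  from OrR1.IH[OF OrR1.prems] obtain k where k: "k \<le> n" "g4proof k (add_mset A0 D) A" by blast
  show ?case using g4proof.OrR1[OF k(2)] k by (auto intro!: exI[of _ "Suc k"])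
next
  case (OrR2 n G B A)
  from OrR2.IH[OF OrR2.prems] obtain k where k: "k \<le> n" "g4proof k (add_mset A0 D) B" by blast
  show ?case using g4proof.OrR2[OF k(2)] k by (auto intro!: exI[of _ "Suc k"])
next
  case (VarImpL n p A G C)
  obtain G1 where G1: "add_mset (Imp (Var p) A) G = add_mset (Box A0) G1" "D = add_mset (Var p) G1" using split1[OF VarImpL.prems] by auto
  obtain G0 where G: "G = add_mset (Box A0) G0" "G1 = add_mset (Imp (Var p) A) G0" using split1[OF G1(1)] by auto
  have "add_mset (Var p) (add_mset A G) = add_mset (Box A0) (add_mset (Var p) (add_mset A G0))"
    using G by (simp add: add_mset_commute)
  from VarImpL.IH[OF this] obtain k where k: "k \<le> n" "g4proof k (add_mset A0 (add_mset (Var p) (add_mset A G0))) C" by blast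
  have "g4proof (Suc k) (add_mset (Var p) (add_mset (Imp (Var p) A) (add_mset A0 G0))) C"
    by (rule g4proof.VarImpL, rule g4_cong[OF k(2)], simp add: add_mset_commute)
  then show ?case using k G G1 by (auto intro!: exI[of _ "Suc k"] simp: add_mset_commute)
next
  case (ImpR n A G B)
  have "add_mset A G = add_mset (Box A0) (add_mset A D)" using ImpR.prems by (simp add: add_mset_commute)
  from ImpR.IH[OF this] obtain k where k: "k \<le> n" "g4proof k (add_mset A0 (add_mset A D)) B" by blast
  have "g4proof (Suc k) (add_mset A0 D) (Imp A B)"
    by (rule g4proof.ImpR, rule g4_cong[OF k(2)], simp add: add_mset_commute)
  then show ?case using k by (auto intro!: exI[of _ "Suc k"])
next
  case (BoxImpL \<Phi> n \<Gamma> B A m C)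
  have "add_mset (Imp (Box A) B) (\<Phi> + image_mset Box \<Gamma>) = add_mset (Box A0) D" using BoxImpL.prems by simp
  from split1[OF this] obtain G0 where G: "\<Phi> + image_mset Box \<Gamma> = add_mset (Box A0) G0" "D = add_mset (Imp (Box A) B) G0" by auto
  then obtain \<Gamma>0 where g: "\<Gamma> = add_mset A0 \<Gamma>0" "G0 = \<Phi> + image_mset Box \<Gamma>0" using box_split[OF G(1) BoxImpL.hyps(1)] by blast
  show ?case
  proof (cases "boxed A0")
    case False
    have r: "\<Phi> + image_mset Box \<Gamma> + {#B#} = add_mset (Box A0) (\<Phi> + image_mset Box \<Gamma>0 + {#B#})"
      using g by simp
    from BoxImpL.IH(2)[OF r] obtain k where k: "k \<le> m" "g4proof k (add_mset A0 (\<Phi> + image_mset Box \<Gamma>0 + {#B#})) C" by blast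
    have "g4proof (Suc (max n k)) (add_mset A0 \<Phi> + image_mset Box \<Gamma>0 + {#Imp (Box A) B#}) C"
      by (rule g4proof.BoxImpL; (rule g4_cong[OF BoxImpL.hyps(2)] g4_cong[OF k(2)])?; simp add: False BoxImpL.hyps(1) g add_mset_commute)
    then show ?thesis using k G g by (auto intro!: exI[of _ "Suc (max n k)"] simp: add_mset_commute)
  next
    case True
    then obtain A1 where A1: "A0 = Box A1" by (auto simp: boxed_def)
    have r: "\<Phi> + \<Gamma> + {#B, Box A#} = add_mset (Box A1) (\<Phi> + \<Gamma>0 + {#B, Box A#})"
      using g A1 by simp
    from BoxImpL.IH(1)[OF r] obtain k where k: "k \<le> n" "g4proof k (add_mset A1 (\<Phi> + \<Gamma>0 + {#B, Box A#})) A" by blast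
    have r2: "\<Phi> + image_mset Box \<Gamma> + {#B#} = add_mset (Box A0) (\<Phi> + image_mset Box \<Gamma>0 + {#B#})"
      using g by simp
    from BoxImpL.IH(2)[OF r2] obtain k' where k': "k' \<le> m" "g4proof k' (add_mset A0 (\<Phi> + image_mset Box \<Gamma>0 + {#B#})) C" by blast
    have "g4proof (Suc (max k k')) (\<Phi> + image_mset Box (add_mset A1 \<Gamma>0) + {#Imp (Box A) B#}) C"
    proof (rule g4proof.BoxImpL)
      show "boxfree \<Phi>" by (rule BoxImpL.hyps(1))
      show "g4proof k (\<Phi> + add_mset A1 \<Gamma>0 + {#B, Box A#}) A"
        using k(2) by (simp add: add_mset_commute)
      show "g4proof k' (\<Phi> + image_mset Box (add_mset A1 \<Gamma>0) + {#B#}) C"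
        using k'(2) A1 by (simp add: add_mset_commute)
    qed
    then show ?thesis using k k' G g A1 by (auto intro!: exI[of _ "Suc (max k k')"] simp: add_mset_commute)
  qed
next
  case (SLtR \<Phi> n \<Gamma> A)
  from SLtR.prems obtain \<Gamma>0 where g: "\<Gamma> = add_mset A0 \<Gamma>0" "D = \<Phi> + image_mset Box \<Gamma>0" using box_split[OF SLtR.prems SLtR.hyps(1)] by blast
  show ?case
  proof (cases "boxed A0")
    case False
    have "g4proof (Suc n) (add_mset A0 \<Phi> + image_mset Box \<Gamma>0) (Box A)"
      by (rule g4proof.SLtR; (rule g4_cong[OF SLtR.hyps(2)])?; simp add: False SLtR.hyps(1) g add_mset_commute)
    then show ?thesis using g by (auto intro!: exI[of _ "Suc n"] simp: add_mset_commute)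
  next
    case True
    then obtain A1 where A1: "A0 = Box A1" by (auto simp: boxed_def)
    have r: "\<Phi> + \<Gamma> + {#Box A#} = add_mset (Box A1) (\<Phi> + \<Gamma>0 + {#Box A#})"
      using g A1 by simp
    from SLtR.IH[OF r] obtain k where k: "k \<le> n" "g4proof k (add_mset A1 (\<Phi> + \<Gamma>0 + {#Box A#})) A" by blast
    have "g4proof (Suc k) (\<Phi> + image_mset Box (add_mset A1 \<Gamma>0)) (Box A)"
      by (rule g4proof.SLtR; (rule g4_cong[OF k(2)])?; simp add: SLtR.hyps(1) g A1 add_mset_commute)
    then show ?thesis using k g A1 by (auto intro!: exI[of _ "Suc k"] simp: add_mset_commute)
  qed
next
  case (AndImpL n A B C G D')
  obtain G0 where G: "G = add_mset (Box A0) G0" "D = add_mset (Imp (And A B) C) G0" using split1[OF AndImpL.prems] by auto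
  have "add_mset (Imp A (Imp B C)) G = add_mset (Box A0) (add_mset (Imp A (Imp B C)) G0)"
    using G by (simp add: add_mset_commute)
  from AndImpL.IH[OF this] obtain k where k: "k \<le> n" "g4proof k (add_mset A0 (add_mset (Imp A (Imp B C)) G0)) D'" by blast
  have "g4proof (Suc k) (add_mset (Imp (And A B) C) (add_mset A0 G0)) D'"
    by (rule g4proof.AndImpL, rule g4_cong[OF k(2)], simp add: add_mset_commute)
  then show ?case using k G by (auto intro!: exI[of _ "Suc k"] simp: add_mset_commute)
next
  case (OrImpL n A C B G D')
  obtain G0 where G: "G = add_mset (Box A0) G0" "D = add_mset (Imp (Or A B) C) G0" using split1[OF OrImpL.prems] by auto
  have "add_mset (Imp A C) (add_mset (Imp B C) G) = add_mset (Box A0) (add_mset (Imp A C) (add_mset (Imp B C) G0))"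
    using G by (simp add: add_mset_commute)
  from OrImpL.IH[OF this] obtain k where k: "k \<le> n" "g4proof k (add_mset A0 (add_mset (Imp A C) (add_mset (Imp B C) G0))) D'" by blast
  have "g4proof (Suc k) (add_mset (Imp (Or A B) C) (add_mset A0 G0)) D'"
    by (rule g4proof.OrImpL, rule g4_cong[OF k(2)], simp add: add_mset_commute)
  then show ?case using k G by (auto intro!: exI[of _ "Suc k"] simp: add_mset_commute)
next
  case (ImpImpL n B C G A m D')
  obtain G0 where G: "G = add_mset (Box A0) G0" "D = add_mset (Imp (Imp A B) C) G0" using split1[OF ImpImpL.prems] by auto
  have e1: "add_mset (Imp B C) G = add_mset (Box A0) (add_mset (Imp B C) G0)" using G by (simp add: add_mset_commute)
  have e2: "add_mset C G = add_mset (Box A0) (add_mset C G0)" using G by (simp add: add_mset_commute)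
  from ImpImpL.IH(1)[OF e1] obtain k where k: "k \<le> n" "g4proof k (add_mset A0 (add_mset (Imp B C) G0)) (Imp A B)" by blast
  from ImpImpL.IH(2)[OF e2] obtain k' where k': "k' \<le> m" "g4proof k' (add_mset A0 (add_mset C G0)) D'" by blast
  have "g4proof (Suc (max k k')) (add_mset (Imp (Imp A B) C) (add_mset A0 G0)) D'"
    by (rule g4proof.ImpImpL; rule g4_cong[OF k(2)] g4_cong[OF k'(2)]; simp add: add_mset_commute)
  then show ?case using k k' G by (auto intro!: exI[of _ "Suc (max k k')"] simp: add_mset_commute)
qed


lemma elim_boximp:
  "g4proof h G C \<Longrightarrow> G = add_mset (Imp (Box F) H) D \<Longrightarrow> \<exists>k\<le>h. g4proof k (add_mset H D) C"
proof (induction arbitrary: D rule: g4proof.induct)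
  case (BotL G C)
  obtain G0 where "G = add_mset (Imp (Box F) H) G0" "D = add_mset Bot G0" using split1[OF BotL.prems] by auto
  then show ?case using g4proof.BotL[of "add_mset H G0" C]
    by (auto intro!: exI[of _ 1] simp: add_mset_commute)
next
  case (IdP p G)
  obtain G0 where "G = add_mset (Imp (Box F) H) G0" "D = add_mset (Var p) G0" using split1[OF IdP.prems] by auto
  then show ?case using g4proof.IdP[of p "add_mset H G0"]
    by (auto intro!: exI[of _ 1] simp: add_mset_commute)
next
  case (AndL n A B G C)
  obtain G0 where G: "G = add_mset (Imp (Box F) H) G0" "D = add_mset (And A B) G0" using split1[OF AndL.prems] by auto
  have "add_mset A (add_mset B G) = add_mset (Imp (Box F) H) (add_mset A (add_mset B G0))"
    using G by (simp add: add_mset_commute)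
  from AndL.IH[OF this] obtain k where k: "k \<le> n" "g4proof k (add_mset H (add_mset A (add_mset B G0))) C" by blast
  have "g4proof (Suc k) (add_mset (And A B) (add_mset H G0)) C"
    by (rule g4proof.AndL, rule g4_cong[OF k(2)], simp add: add_mset_commute)
  then show ?case using k G by (auto intro!: exI[of _ "Suc k"] simp: add_mset_commute)
next
  case (AndR n G A m B)
  from AndR.IH(1)[OF AndR.prems] obtain k where k: "k \<le> n" "g4proof k (add_mset H D) A" by blast
  from AndR.IH(2)[OF AndR.prems] obtain k' where k': "k' \<le> m" "g4proof k' (add_mset H D) B" by blast
  show ?case using g4proof.AndR[OF k(2) k'(2)] k k' by (auto intro!: exI[of _ "Suc (max k k')"])
next
  case (OrL n A G C m B)
  obtain G0 where G: "G = add_mset (Imp (Box F) H) G0" "D = add_mset (Or A B) G0" using split1[OF OrL.prems] by auto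
  have e1: "add_mset A G = add_mset (Imp (Box F) H) (add_mset A G0)" using G by (simp add: add_mset_commute)
  have e2: "add_mset B G = add_mset (Imp (Box F) H) (add_mset B G0)" using G by (simp add: add_mset_commute)
  from OrL.IH(1)[OF e1] obtain k where k: "k \<le> n" "g4proof k (add_mset H (add_mset A G0)) C" by blast
  from OrL.IH(2)[OF e2] obtain k' where k': "k' \<le> m" "g4proof k' (add_mset H (add_mset B G0)) C" by blast
  have "g4proof (Suc (max k k')) (add_mset (Or A B) (add_mset H G0)) C"
    by (rule g4proof.OrL; rule g4_cong[OF k(2)] g4_cong[OF k'(2)]; simp add: add_mset_commute)
  then show ?case using k k' G by (auto intro!: exI[of _ "Suc (max k k')"] simp: add_mset_commute)
next
  case (OrR1 n G A B)
  from OrR1.IH[OF OrR1.prems] obtain k where k: "k \<le> n" "g4proof k (add_mset H D) A" by blast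
  show ?case using g4proof.OrR1[OF k(2)] k by (auto intro!: exI[of _ "Suc k"])
next
  case (OrR2 n G B A)
  from OrR2.IH[OF OrR2.prems] obtain k where k: "k \<le> n" "g4proof k (add_mset H D) B" by blast
  show ?case using g4proof.OrR2[OF k(2)] k by (auto intro!: exI[of _ "Suc k"])
next
  case (VarImpL n p A G C)
  obtain G1 where G1: "add_mset (Imp (Var p) A) G = add_mset (Imp (Box F) H) G1" "D = add_mset (Var p) G1" using split1[OF VarImpL.prems] by auto
  obtain G0 where G: "G = add_mset (Imp (Box F) H) G0" "G1 = add_mset (Imp (Var p) A) G0" using split1[OF G1(1)] by auto
  have "add_mset (Var p) (add_mset A G) = add_mset (Imp (Box F) H) (add_mset (Var p) (add_mset A G0))"
    using G by (simp add: add_mset_commute)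
  from VarImpL.IH[OF this] obtain k where k: "k \<le> n" "g4proof k (add_mset H (add_mset (Var p) (add_mset A G0))) C" by blast
  have "g4proof (Suc k) (add_mset (Var p) (add_mset (Imp (Var p) A) (add_mset H G0))) C"
    by (rule g4proof.VarImpL, rule g4_cong[OF k(2)], simp add: add_mset_commute)
  then show ?case using k G G1 by (auto intro!: exI[of _ "Suc k"] simp: add_mset_commute)
next
  case (BoxImpL \<Phi> n \<Gamma> B A m C)
  have e: "add_mset (Imp (Box A) B) (\<Phi> + image_mset Box \<Gamma>) = add_mset (Imp (Box F) H) D" using BoxImpL.prems by simp
  show ?case
  proof (cases "Imp (Box A) B = Imp (Box F) H")
    case True
    then have "D = \<Phi> + image_mset Box \<Gamma>" "B = H" using e by auto
    then show ?thesis using BoxImpL.hyps(3) by (auto intro!: exI[of _ m])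
  next
    case False
    from split1[OF e False] obtain G0 where G: "\<Phi> + image_mset Box \<Gamma> = add_mset (Imp (Box F) H) G0" "D = add_mset (Imp (Box A) B) G0" by auto
    obtain \<Phi>0 where p: "\<Phi> = add_mset (Imp (Box F) H) \<Phi>0" "G0 = \<Phi>0 + image_mset Box \<Gamma>"
      using nbox_split[OF G(1)] by auto
    have bf: "boxfree \<Phi>0" using BoxImpL.hyps(1) p by simp
    have r1: "\<Phi> + \<Gamma> + {#B, Box A#} = add_mset (Imp (Box F) H) (\<Phi>0 + \<Gamma> + {#B, Box A#})" using p by simp
    have r2: "\<Phi> + image_mset Box \<Gamma> + {#B#} = add_mset (Imp (Box F) H) (\<Phi>0 + image_mset Box \<Gamma> + {#B#})" using p by simp
    from BoxImpL.IH(1)[OF r1] obtain k where k: "k \<le> n" "g4proof k (add_mset H (\<Phi>0 + \<Gamma> + {#B, Box A#})) A" by blast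
    from BoxImpL.IH(2)[OF r2] obtain k' where k': "k' \<le> m" "g4proof k' (add_mset H (\<Phi>0 + image_mset Box \<Gamma> + {#B#})) C" by blast
    show ?thesis
    proof (cases "boxed H")
      case False
      have "g4proof (Suc (max k k')) (add_mset H \<Phi>0 + image_mset Box \<Gamma> + {#Imp (Box A) B#}) C"
      proof (rule g4proof.BoxImpL)
        show "boxfree (add_mset H \<Phi>0)" using bf False by simp
        show "g4proof k (add_mset H \<Phi>0 + \<Gamma> + {#B, Box A#}) A"
          using k(2) by (simp add: add_mset_commute)
        show "g4proof k' (add_mset H \<Phi>0 + image_mset Box \<Gamma> + {#B#}) C"
          using k'(2) by (simp add: add_mset_commute)
      qed
      then show ?thesis using k k' G p by (auto intro!: exI[of _ "Suc (max k k')"] simp: add_mset_commute)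
    next
      case True
      then obtain H1 where H1: "H = Box H1" by (auto simp: boxed_def)
      from unbox[OF k(2)[unfolded H1] refl] obtain j where j: "j \<le> k" "g4proof j (add_mset H1 (\<Phi>0 + \<Gamma> + {#B, Box A#})) A" by blast
      have "g4proof (Suc (max j k')) (\<Phi>0 + image_mset Box (add_mset H1 \<Gamma>) + {#Imp (Box A) B#}) C"
      proof (rule g4proof.BoxImpL)
        show "boxfree \<Phi>0" using bf by simp
        show "g4proof j (\<Phi>0 + add_mset H1 \<Gamma> + {#B, Box A#}) A"
          using j(2) by (simp add: add_mset_commute)
        show "g4proof k' (\<Phi>0 + image_mset Box (add_mset H1 \<Gamma>) + {#B#}) C"
          using k'(2) H1 by (simp add: add_mset_commute)
      qed
      then show ?thesis using k j k' G p H1 by (auto intro!: exI[of _ "Suc (max j k')"] simp: add_mset_commute)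
    qed
  qed
next
  case (SLtR \<Phi> n \<Gamma> A)
  obtain \<Phi>0 where p: "\<Phi> = add_mset (Imp (Box F) H) \<Phi>0" "D = \<Phi>0 + image_mset Box \<Gamma>"
    using nbox_split[OF SLtR.prems] by auto
  have bf: "boxfree \<Phi>0" using SLtR.hyps(1) p by simp
  have r1: "\<Phi> + \<Gamma> + {#Box A#} = add_mset (Imp (Box F) H) (\<Phi>0 + \<Gamma> + {#Box A#})" using p by simp
  from SLtR.IH[OF r1] obtain k where k: "k \<le> n" "g4proof k (add_mset H (\<Phi>0 + \<Gamma> + {#Box A#})) A" by blast
  show ?case
  proof (cases "boxed H")
    case False
    have "g4proof (Suc k) (add_mset H \<Phi>0 + image_mset Box \<Gamma>) (Box A)"
    proof (rule g4proof.SLtR)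
      show "boxfree (add_mset H \<Phi>0)" using bf False by simp
      show "g4proof k (add_mset H \<Phi>0 + \<Gamma> + {#Box A#}) A"
        using k(2) by (simp add: add_mset_commute)
    qed
    then show ?thesis using k p by (auto intro!: exI[of _ "Suc k"] simp: add_mset_commute)
  next
    case True
    then obtain H1 where H1: "H = Box H1" by (auto simp: boxed_def)
    from unbox[OF k(2)[unfolded H1] refl] obtain j where j: "j \<le> k" "g4proof j (add_mset H1 (\<Phi>0 + \<Gamma> + {#Box A#})) A" by blast
    have "g4proof (Suc j) (\<Phi>0 + image_mset Box (add_mset H1 \<Gamma>)) (Box A)"
    proof (rule g4proof.SLtR)
      show "boxfree \<Phi>0" using bf by simp
      show "g4proof j (\<Phi>0 + add_mset H1 \<Gamma> + {#Box A#}) A"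
        using j(2) by (simp add: add_mset_commute)
    qed
    then show ?thesis using k j p H1 by (auto intro!: exI[of _ "Suc j"] simp: add_mset_commute)
  qed
next
  case (ImpR n A G B)
  have "add_mset A G = add_mset (Imp (Box F) H) (add_mset A D)" using ImpR.prems by (simp add: add_mset_commute)
  from ImpR.IH[OF this] obtain k where k: "k \<le> n" "g4proof k (add_mset H (add_mset A D)) B" by blast
  have "g4proof (Suc k) (add_mset H D) (Imp A B)"
    by (rule g4proof.ImpR, rule g4_cong[OF k(2)], simp add: add_mset_commute)
  then show ?case using k by (auto intro!: exI[of _ "Suc k"])
next
  case (AndImpL n A B C G D')
  obtain G0 where G: "G = add_mset (Imp (Box F) H) G0" "D = add_mset (Imp (And A B) C) G0" using split1[OF AndImpL.prems] by auto
  have "add_mset (Imp A (Imp B C)) G = add_mset (Imp (Box F) H) (add_mset (Imp A (Imp B C)) G0)"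
    using G by (simp add: add_mset_commute)
  from AndImpL.IH[OF this] obtain k where k: "k \<le> n" "g4proof k (add_mset H (add_mset (Imp A (Imp B C)) G0)) D'" by blast
  have "g4proof (Suc k) (add_mset (Imp (And A B) C) (add_mset H G0)) D'"
    by (rule g4proof.AndImpL, rule g4_cong[OF k(2)], simp add: add_mset_commute)
  then show ?case using k G by (auto intro!: exI[of _ "Suc k"] simp: add_mset_commute)
next
  case (OrImpL n A C B G D')
  obtain G0 where G: "G = add_mset (Imp (Box F) H) G0" "D = add_mset (Imp (Or A B) C) G0" using split1[OF OrImpL.prems] by auto
  have "add_mset (Imp A C) (add_mset (Imp B C) G) = add_mset (Imp (Box F) H) (add_mset (Imp A C) (add_mset (Imp B C) G0))"
    using G by (simp add: add_mset_commute)
  from OrImpL.IH[OF this] obtain k where k: "k \<le> n" "g4proof k (add_mset H (add_mset (Imp A C) (add_mset (Imp B C) G0))) D'" by blast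
  have "g4proof (Suc k) (add_mset (Imp (Or A B) C) (add_mset H G0)) D'"
    by (rule g4proof.OrImpL, rule g4_cong[OF k(2)], simp add: add_mset_commute)
  then show ?case using k G by (auto intro!: exI[of _ "Suc k"] simp: add_mset_commute)
next
  case (ImpImpL n B C G A m D')
  obtain G0 where G: "G = add_mset (Imp (Box F) H) G0" "D = add_mset (Imp (Imp A B) C) G0" using split1[OF ImpImpL.prems] by auto
  have e1: "add_mset (Imp B C) G = add_mset (Imp (Box F) H) (add_mset (Imp B C) G0)" using G by (simp add: add_mset_commute)
  have e2: "add_mset C G = add_mset (Imp (Box F) H) (add_mset C G0)" using G by (simp add: add_mset_commute)
  from ImpImpL.IH(1)[OF e1] obtain k where k: "k \<le> n" "g4proof k (add_mset H (add_mset (Imp B C) G0)) (Imp A B)" by blast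
  from ImpImpL.IH(2)[OF e2] obtain k' where k': "k' \<le> m" "g4proof k' (add_mset H (add_mset C G0)) D'" by blast
  have "g4proof (Suc (max k k')) (add_mset (Imp (Imp A B) C) (add_mset H G0)) D'"
    by (rule g4proof.ImpImpL; rule g4_cong[OF k(2)] g4_cong[OF k'(2)]; simp add: add_mset_commute)
  then show ?case using k k' G by (auto intro!: exI[of _ "Suc (max k k')"] simp: add_mset_commute)
qed

theorem mainTheorem8:
  fixes \<Delta> :: "form multiset" and \<phi> \<psi> \<chi> :: form and h :: nat
  assumes "g4proof h (add_mset (Imp (Box \<phi>) \<psi>) \<Delta>) \<chi>"
  shows "\<exists>k\<le>h. g4proof k (add_mset \<psi> \<Delta>) \<chi>"
  using elim_boximp[OF assms refl] .

end
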